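(* Let $n\ge3$ and $0<q<1$. For every relationship network $G$ on $V$ satisfying structural balance, the duples mechanism selects a needy agent with probability $$P_D(G)\ \ge\ q+q(1-q)\,\frac{3n-8}{8(n-1)}.$$
   Context: A relationship network $G$ on $V=\{1,\dots,n\}$ assigns to every unordered pair of distinct agents exactly one of the symmetric relations friends, enemies, impartial; $F_j,E_j,I_j$ are the friends, enemies, impartials of $j$. Structural balance: for all pairwise distinct $i,j,k$: $j\in F_i,k\in F_j\Rightarrow k\in F_i$; $j\in E_i,k\in E_j\Rightarrow k\in F_i$; $j\in E_i,k\in F_j\Rightarrow k\in E_i$. Each agent is needy independently with probability $q$; $N$ is the random needy set; every agent $j$ reports truthfully $(N,F_j,E_j)$. Duples mechanism $g^D$: for agent $l$ and $j\ne l$, $\mathrm{lev}_l(j)=1,\dots,6$ according as $j\in F_l\cap N$, $F_l\setminus N$, $I_l\cap N$, $I_l\setminus N$, $E_l\cap N$, $E_l\setminus N$. For distinct $j,k$, agent $l\notin\{j,k\}$ votes for $j$ against $k$ if $\mathrm{lev}_l(j)<\mathrm{lev}_l(k)$ (abstains if equal); $x_{jk}$ counts these votes. $g^D_j(\{j,k\})=1,\tfrac12,0$ as $x_{jk}>,=,<x_{kj}$, $g^D_k(\{j,k\})=1-g^D_j(\{j,k\})$, and $g^D_i=\frac{2}{n(n-1)}\sum_{j\ne i}g^D_i(\{i,j\})$. $P_D(G)=\mathbb E[\sum_{i\in N}g^D_i]$ under truthful reports. *)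

theory Defs
  imports Complex_Main
begin

datatype relation = Friends | Enemies | Impartial

text \<open>Agents are V = {1..n}; a relationship network is a function r assigning to every
  pair of agents a relation, required to be symmetric on distinct pairs
  (values on the diagonal are irrelevant).  j is a friend of i iff r i j = Friends, etc.\<close>

definition agents :: "nat \<Rightarrow> nat set" where
  "agents n = {1..n}"

definition rel_network :: "nat \<Rightarrow> (nat \<Rightarrow> nat \<Rightarrow> relation) \<Rightarrow> bool" where
  "rel_network n r \<longleftrightarrow> (\<forall>i\<in>agents n. \<forall>j\<in>agents n. i \<noteq> j \<longrightarrow> r i j = r j i)"

definition structurally_balanced :: "nat \<Rightarrow> (nat \<Rightarrow> nat \<Rightarrow> relation) \<Rightarrow> bool" where
  "structurally_balanced n r \<longleftrightarrow>
     (\<forall>i\<in>agents n. \<forall>j\<in>agents n. \<forall>k\<in>agents n. i \<noteq> j \<and> j \<noteq> k \<and> i \<noteq> k \<longrightarrow>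
        (r i j = Friends \<and> r j k = Friends \<longrightarrow> r i k = Friends) \<and>
        (r i j = Enemies \<and> r j k = Enemies \<longrightarrow> r i k = Friends) \<and>
        (r i j = Enemies \<and> r j k = Friends \<longrightarrow> r i k = Enemies))"

definition lev :: "(nat \<Rightarrow> nat \<Rightarrow> relation) \<Rightarrow> nat set \<Rightarrow> nat \<Rightarrow> nat \<Rightarrow> nat" where
  "lev r N l j = (case r l j of
      Friends \<Rightarrow> (if j \<in> N then 1 else 2)
    | Impartial \<Rightarrow> (if j \<in> N then 3 else 4)
    | Enemies \<Rightarrow> (if j \<in> N then 5 else 6))"

text \<open>x_{jk}: number of agents l outside {j,k} voting for j against k.\<close>
definition votes :: "nat \<Rightarrow> (nat \<Rightarrow> nat \<Rightarrow> relation) \<Rightarrow> nat set \<Rightarrow> nat \<Rightarrow> nat \<Rightarrow> nat" where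
  "votes n r N j k = card {l \<in> agents n - {j, k}. lev r N l j < lev r N l k}"

definition duple_share :: "nat \<Rightarrow> (nat \<Rightarrow> nat \<Rightarrow> relation) \<Rightarrow> nat set \<Rightarrow> nat \<Rightarrow> nat \<Rightarrow> real" where
  "duple_share n r N j k =
     (if votes n r N j k > votes n r N k j then 1
      else if votes n r N j k = votes n r N k j then 1/2 else 0)"

definition duples :: "nat \<Rightarrow> (nat \<Rightarrow> nat \<Rightarrow> relation) \<Rightarrow> nat set \<Rightarrow> nat \<Rightarrow> real" where
  "duples n r N i = 2 / (real n * (real n - 1)) * (\<Sum>j\<in>agents n - {i}. duple_share n r N i j)"

text \<open>P_D(G): expected probability that a needy agent is selected, each agent needy
  independently with probability q.\<close>
definition P_D :: "nat \<Rightarrow> real \<Rightarrow> (nat \<Rightarrow> nat \<Rightarrow> relation) \<Rightarrow> real" where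
  "P_D n q r = (\<Sum>N\<in>Pow (agents n).
      q ^ card N * (1 - q) ^ (n - card N) * (\<Sum>i\<in>N. duples n r N i))"

end

theory Submission
  imports Defs Complex_Main
begin


definition wt :: "real \<Rightarrow> nat set \<Rightarrow> nat set \<Rightarrow> real" where
  "wt q A N = q ^ card N * (1 - q) ^ (card A - card N)"

lemma pow_split:
  assumes "finite W" "x \<notin> W"
  shows "(\<Sum>N\<in>Pow (insert x W). wt q (insert x W) N * F N) =
     q * (\<Sum>M\<in>Pow W. wt q W M * F (insert x M)) + (1 - q) * (\<Sum>M\<in>Pow W. wt q W M * F M)"
proof -
  have disj: "Pow W \<inter> insert x ` Pow W = {}" using assms by auto
  have inj: "inj_on (insert x) (Pow W)" by (intro inj_onI) (metis PowD insert_ident subsetD assms(2))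
  have fin: "finite (Pow W)" using assms by simp
  have "(\<Sum>N\<in>Pow (insert x W). wt q (insert x W) N * F N) =
     (\<Sum>N\<in>Pow W. wt q (insert x W) N * F N) + (\<Sum>N\<in>insert x ` Pow W. wt q (insert x W) N * F N)"
    unfolding Pow_insert using disj fin by (simp add: sum.union_disjoint)
  also have "(\<Sum>N\<in>insert x ` Pow W. wt q (insert x W) N * F N) = (\<Sum>M\<in>Pow W. wt q (insert x W) (insert x M) * F (insert x M))"
    using inj by (simp add: sum.reindex)
  also have "\<dots> = q * (\<Sum>M\<in>Pow W. wt q W M * F (insert x M))"
    unfolding sum_distrib_left
  proof (rule sum.cong[OF refl])
    fix M assume "M \<in> Pow W"
    then have "M \<subseteq> W" by auto
    then have "finite M" "x \<notin> M" "card M \<le> card W" using assms finite_subset card_mono by blast+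
    then show "wt q (insert x W) (insert x M) * F (insert x M) = q * (wt q W M * F (insert x M))"
      using assms by (simp add: wt_def)
  qed
  also have "(\<Sum>N\<in>Pow W. wt q (insert x W) N * F N) = (1 - q) * (\<Sum>M\<in>Pow W. wt q W M * F M)"
    unfolding sum_distrib_left
  proof (rule sum.cong[OF refl])
    fix M assume "M \<in> Pow W"
    then have "M \<subseteq> W" by auto
    then have "finite M" "x \<notin> M" "card M \<le> card W" using assms finite_subset card_mono by blast+
    then have "card (insert x W) - card M = Suc (card W - card M)" using assms by simp
    then show "wt q (insert x W) M * F M = (1 - q) * (wt q W M * F M)"
      by (simp add: wt_def)
  qed
  finally show ?thesis by simp
qed

lemma wt_total: "finite W \<Longrightarrow> (\<Sum>M\<in>Pow W. wt q W M) = 1"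
proof (induction W rule: finite_induct)
  case empty
  then show ?case by (simp add: wt_def)
next
  case (insert x W)
  have "(\<Sum>M\<in>Pow (insert x W). wt q (insert x W) M) = (\<Sum>M\<in>Pow (insert x W). wt q (insert x W) M * 1)" by simp
  also have "\<dots> = q * (\<Sum>M\<in>Pow W. wt q W M * 1) + (1 - q) * (\<Sum>M\<in>Pow W. wt q W M * 1)"
    by (rule pow_split[OF insert(1,2)])
  finally show ?case using insert by simp
qed

lemma wt_const: "finite W \<Longrightarrow> (\<Sum>M\<in>Pow W. wt q W M * c) = c"
  using wt_total[of W q] by (simp add: sum_distrib_right[symmetric])

lemma marginal:
  assumes "finite V" "i \<in> V" "j \<in> V" "i \<noteq> j"
  shows "(\<Sum>N\<in>Pow V. wt q V N * G (N \<inter> {i,j})) =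
    q * (q * G {i,j} + (1 - q) * G {i}) + (1 - q) * (q * G {j} + (1 - q) * G {})"
proof -
  define W where "W = V - {i,j}"
  have V: "V = insert i (insert j W)" using assms W_def by auto
  have fW: "finite W" using assms W_def by simp
  have nij: "i \<notin> insert j W" "j \<notin> W" using W_def assms by auto
  have s1: "\<And>H. (\<Sum>N\<in>Pow V. wt q V N * H N) = q * (q * (\<Sum>M\<in>Pow W. wt q W M * H (insert i (insert j M)))
      + (1 - q) * (\<Sum>M\<in>Pow W. wt q W M * H (insert i M)))
      + (1 - q) * (q * (\<Sum>M\<in>Pow W. wt q W M * H (insert j M)) + (1 - q) * (\<Sum>M\<in>Pow W. wt q W M * H M))"
  proof -
    fix H
    have "(\<Sum>N\<in>Pow V. wt q V N * H N) = q * (\<Sum>M\<in>Pow (insert j W). wt q (insert j W) M * H (insert i M))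
      + (1 - q) * (\<Sum>M\<in>Pow (insert j W). wt q (insert j W) M * H M)"
      unfolding V by (rule pow_split) (use fW nij in auto)
    also have "(\<Sum>M\<in>Pow (insert j W). wt q (insert j W) M * H (insert i M)) =
       q * (\<Sum>M\<in>Pow W. wt q W M * H (insert i (insert j M))) + (1 - q) * (\<Sum>M\<in>Pow W. wt q W M * H (insert i M))"
      by (rule pow_split[OF fW nij(2)])
    also have "(\<Sum>M\<in>Pow (insert j W). wt q (insert j W) M * H M) =
       q * (\<Sum>M\<in>Pow W. wt q W M * H (insert j M)) + (1 - q) * (\<Sum>M\<in>Pow W. wt q W M * H M)"
      by (rule pow_split[OF fW nij(2)])
    finally show "(\<Sum>N\<in>Pow V. wt q V N * H N) = q * (q * (\<Sum>M\<in>Pow W. wt q W M * H (insert i (insert j M)))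
      + (1 - q) * (\<Sum>M\<in>Pow W. wt q W M * H (insert i M)))
      + (1 - q) * (q * (\<Sum>M\<in>Pow W. wt q W M * H (insert j M)) + (1 - q) * (\<Sum>M\<in>Pow W. wt q W M * H M))"
      .
  qed
  have c1: "\<And>M. M \<in> Pow W \<Longrightarrow> insert i (insert j M) \<inter> {i,j} = {i,j}" by auto
  have c2: "\<And>M. M \<in> Pow W \<Longrightarrow> insert i M \<inter> {i,j} = {i}" using W_def assms by auto
  have c3: "\<And>M. M \<in> Pow W \<Longrightarrow> insert j M \<inter> {i,j} = {j}" using W_def assms by auto
  have c4: "\<And>M. M \<in> Pow W \<Longrightarrow> M \<inter> {i,j} = {}" using W_def assms by auto
  have e1: "(\<Sum>M\<in>Pow W. wt q W M * G (insert i (insert j M) \<inter> {i,j})) = G {i,j}"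
    using wt_const[OF fW, of q "G {i,j}"] by (metis (no_types, lifting) c1 sum.cong)
  have e2: "(\<Sum>M\<in>Pow W. wt q W M * G (insert i M \<inter> {i,j})) = G {i}"
    using wt_const[OF fW, of q "G {i}"] by (metis (no_types, lifting) c2 sum.cong)
  have e3: "(\<Sum>M\<in>Pow W. wt q W M * G (insert j M \<inter> {i,j})) = G {j}"
    using wt_const[OF fW, of q "G {j}"] by (metis (no_types, lifting) c3 sum.cong)
  have e4: "(\<Sum>M\<in>Pow W. wt q W M * G (M \<inter> {i,j})) = G {}"
    using wt_const[OF fW, of q "G {}"] by (metis (no_types, lifting) c4 sum.cong)
  show ?thesis unfolding s1[of "\<lambda>N. G (N \<inter> {i,j})"] e1 e2 e3 e4 ..
qed



definition cls :: "relation \<Rightarrow> nat" where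
  "cls x = (case x of Friends \<Rightarrow> 0 | Impartial \<Rightarrow> 1 | Enemies \<Rightarrow> 2)"

lemma lev_eq: "lev r N l j = 2 * cls (r l j) + (if j \<in> N then 1 else 2)"
  by (cases "r l j") (auto simp: lev_def cls_def)

lemma votes_local: "votes n r N j k = votes n r (N \<inter> {j,k}) j k"
  unfolding votes_def lev_eq by simp

lemma share_local: "duple_share n r N j k = duple_share n r (N \<inter> {j,k}) j k"
  unfolding duple_share_def using votes_local[of n r N j k] votes_local[of n r N k j]
  by (simp add: insert_commute)

lemma share_swap: "duple_share n r N j k + duple_share n r N k j = 1"
  unfolding duple_share_def by auto

definition Off :: "nat \<Rightarrow> (nat \<times> nat) set" where
  "Off n = {(i,j). i \<in> agents n \<and> j \<in> agents n \<and> i \<noteq> j}"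

lemma Off_Sigma: "Off n = Sigma (agents n) (\<lambda>i. agents n - {i})"
  unfolding Off_def by auto

lemma fin_agents: "finite (agents n)" and card_agents: "card (agents n) = n"
  by (auto simp: agents_def)

lemma fin_Off: "finite (Off n)"
  unfolding Off_Sigma using fin_agents by auto

lemma card_Off: "card (Off n) = n * (n - 1)"
proof -
  have "card (Off n) = (\<Sum>i\<in>agents n. card (agents n - {i}))"
    unfolding Off_Sigma using fin_agents by (simp add: card_SigmaI)
  also have "\<dots> = (\<Sum>i\<in>agents n. n - 1)"
    using fin_agents card_agents by (intro sum.cong) (auto simp: card_Diff_singleton)
  finally show ?thesis using card_agents by simp
qed

lemma sum_Off_swap: "(\<Sum>p\<in>Off n. f p) = (\<Sum>p\<in>Off n. f (snd p, fst p))"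
  by (rule sum.reindex_bij_witness[where i="\<lambda>p. (snd p, fst p)" and j="\<lambda>p. (snd p, fst p)"])
     (auto simp: Off_def)

lemma sum_Off_half:
  assumes "\<And>i j. (i,j) \<in> Off n \<Longrightarrow> f (i,j) + f (j,i) = (c::real)"
  shows "(\<Sum>p\<in>Off n. f p) = c * card (Off n) / 2"
proof -
  have "2 * (\<Sum>p\<in>Off n. f p) = (\<Sum>p\<in>Off n. f p) + (\<Sum>p\<in>Off n. f (snd p, fst p))"
    using sum_Off_swap[of f n] by simp
  also have "\<dots> = (\<Sum>p\<in>Off n. c)" unfolding sum.distrib[symmetric]
    by (rule sum.cong) (auto simp: assms)
  finally show ?thesis by (simp add: field_simps)
qed

lemma PD_formula:
  "P_D n q r = 2 / (real n * (real n - 1)) * (\<Sum>p\<in>Off n.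
      q * q * duple_share n r {fst p, snd p} (fst p) (snd p) + q * (1 - q) * duple_share n r {fst p} (fst p) (snd p))"
proof -
  define c where "c = 2 / (real n * (real n - 1))"
  define G where "G p S = (if fst p \<in> S then duple_share n r S (fst p) (snd p) else 0)" for p S
  have inner: "(\<Sum>i\<in>N. duples n r N i) = c * (\<Sum>p\<in>Off n. G p (N \<inter> {fst p, snd p}))"
    if "N \<subseteq> agents n" for N
  proof -
    have "(\<Sum>i\<in>N. duples n r N i) = (\<Sum>i\<in>agents n. if i \<in> N then duples n r N i else 0)"
      using that fin_agents by (simp add: sum.If_cases Int_absorb1)
    also have "\<dots> = c * (\<Sum>i\<in>agents n. \<Sum>j\<in>agents n - {i}. if i \<in> N then duple_share n r N i j else 0)"
      unfolding duples_def c_def sum_distrib_left by (intro sum.cong) auto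
    also have "\<dots> = c * (\<Sum>p\<in>Off n. if fst p \<in> N then duple_share n r N (fst p) (snd p) else 0)"
      unfolding Off_Sigma using fin_agents by (simp add: sum.Sigma split_def)
    also have "\<dots> = c * (\<Sum>p\<in>Off n. G p (N \<inter> {fst p, snd p}))"
      unfolding G_def by (intro arg_cong[where f="\<lambda>x. c * x"] sum.cong refl)
        (use share_local[of n r N] in auto)
    finally show ?thesis .
  qed
  have "P_D n q r = (\<Sum>N\<in>Pow (agents n). wt q (agents n) N * (\<Sum>i\<in>N. duples n r N i))"
    unfolding P_D_def wt_def card_agents ..
  also have "\<dots> = (\<Sum>N\<in>Pow (agents n). wt q (agents n) N * (c * (\<Sum>p\<in>Off n. G p (N \<inter> {fst p, snd p}))))"
    using inner by (intro sum.cong) auto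
  also have "\<dots> = c * (\<Sum>p\<in>Off n. \<Sum>N\<in>Pow (agents n). wt q (agents n) N * G p (N \<inter> {fst p, snd p}))"
    by (simp add: sum_distrib_left mult_ac sum.swap[of _ "Pow (agents n)"])
  also have "\<dots> = c * (\<Sum>p\<in>Off n. q * q * duple_share n r {fst p, snd p} (fst p) (snd p) + q * (1 - q) * duple_share n r {fst p} (fst p) (snd p))"
  proof (intro arg_cong[where f="\<lambda>x. c * x"] sum.cong refl)
    fix p assume p: "p \<in> Off n"
    then have "fst p \<in> agents n" "snd p \<in> agents n" "fst p \<noteq> snd p" by (auto simp: Off_def)
    then show "(\<Sum>N\<in>Pow (agents n). wt q (agents n) N * G p (N \<inter> {fst p, snd p})) =
      q * q * duple_share n r {fst p, snd p} (fst p) (snd p) + q * (1 - q) * duple_share n r {fst p} (fst p) (snd p)"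
      using marginal[OF fin_agents, where i="fst p" and j="snd p" and q=q and G="G p"] by (simp add: G_def algebra_simps)
  qed
  finally show ?thesis unfolding c_def .
qed



definition Pv :: "nat \<Rightarrow> (nat \<Rightarrow> nat \<Rightarrow> relation) \<Rightarrow> nat \<Rightarrow> nat \<Rightarrow> nat set" where
  "Pv n r i j = {l \<in> agents n - {i,j}. cls (r l j) < cls (r l i)}"
definition Qv :: "nat \<Rightarrow> (nat \<Rightarrow> nat \<Rightarrow> relation) \<Rightarrow> nat \<Rightarrow> nat \<Rightarrow> nat set" where
  "Qv n r i j = {l \<in> agents n - {i,j}. cls (r l i) \<le> cls (r l j)}"

lemma votes_Q: "i \<noteq> j \<Longrightarrow> votes n r {i} i j = card (Qv n r i j)"
  unfolding votes_def Qv_def lev_eq by (rule arg_cong[where f=card]) auto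

lemma votes_P: "i \<noteq> j \<Longrightarrow> votes n r {i} j i = card (Pv n r i j)"
  unfolding votes_def Pv_def lev_eq by (rule arg_cong[where f=card]) auto

lemma PQ_card:
  assumes "i \<in> agents n" "j \<in> agents n" "i \<noteq> j"
  shows "card (Pv n r i j) + card (Qv n r i j) = n - 2"
proof -
  have "Pv n r i j \<union> Qv n r i j = agents n - {i,j}" "Pv n r i j \<inter> Qv n r i j = {}"
    unfolding Pv_def Qv_def by auto
  moreover have "card (agents n - {i,j}) = n - 2"
    using assms fin_agents card_agents by (simp add: card_Diff_subset)
  moreover have "finite (Pv n r i j)" "finite (Qv n r i j)"
    unfolding Pv_def Qv_def using fin_agents by auto
  ultimately show ?thesis by (metis card_Un_disjoint)
qed

lemma P_sub_Q: "Pv n r i j \<subseteq> Qv n r j i"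
  unfolding Pv_def Qv_def by auto

lemma card_P_le_Q: "card (Pv n r i j) \<le> card (Qv n r j i)"
  by (rule card_mono[OF _ P_sub_Q]) (simp add: Qv_def fin_agents)

definition badset :: "nat \<Rightarrow> (nat \<Rightarrow> nat \<Rightarrow> relation) \<Rightarrow> (nat \<times> nat) set" where
  "badset n r = {p \<in> Off n. n - 2 \<le> 2 * card (Pv n r (fst p) (snd p)) \<or> n - 2 \<le> 2 * card (Pv n r (snd p) (fst p))}"

lemma share_pair:
  assumes "(i,j) \<in> Off n"
  shows "duple_share n r {i} i j + duple_share n r {j} j i \<ge> 1 + (if (i,j) \<in> badset n r then 0 else 1)"
proof -
  have a: "i \<in> agents n" "j \<in> agents n" "i \<noteq> j" using assms by (auto simp: Off_def)
  define X where "X = card (Qv n r i j)"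
  define Y where "Y = card (Pv n r i j)"
  define X' where "X' = card (Qv n r j i)"
  define Y' where "Y' = card (Pv n r j i)"
  have h: "X + Y = n - 2" "X' + Y' = n - 2" "Y \<le> X'" "Y' \<le> X"
    using PQ_card[OF a, of r] PQ_card[of j n i r] a card_P_le_Q[of n r i j] card_P_le_Q[of n r j i]
    unfolding X_def Y_def X'_def Y'_def by (auto simp: add.commute)
  have v: "votes n r {i} i j = X" "votes n r {i} j i = Y" "votes n r {j} j i = X'" "votes n r {j} i j = Y'"
    using a votes_Q votes_P unfolding X_def Y_def X'_def Y'_def by auto
  have b: "(i,j) \<in> badset n r \<longleftrightarrow> n - 2 \<le> 2 * Y \<or> n - 2 \<le> 2 * Y'"
    using assms unfolding badset_def Y_def Y'_def by auto
  show ?thesis unfolding duple_share_def v b using h by auto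
qed

lemma badset_sub: "badset n r \<subseteq> Off n" unfolding badset_def by auto

lemma sum_s:
  "2 * (\<Sum>p\<in>Off n. duple_share n r {fst p} (fst p) (snd p)) \<ge> 2 * real (card (Off n)) - real (card (badset n r))"
proof -
  let ?s = "\<lambda>p. duple_share n r {fst p} (fst p) (snd p)"
  have "2 * (\<Sum>p\<in>Off n. ?s p) = (\<Sum>p\<in>Off n. ?s p) + (\<Sum>p\<in>Off n. ?s (snd p, fst p))"
    using sum_Off_swap[of ?s n] by simp
  also have "\<dots> = (\<Sum>p\<in>Off n. ?s p + ?s (snd p, fst p))" by (simp add: sum.distrib)
  also have "\<dots> \<ge> (\<Sum>p\<in>Off n. 1 + (if p \<in> badset n r then 0 else 1))"
    by (intro sum_mono) (use share_pair in force)
  moreover have "(\<Sum>p\<in>Off n. 1 + (if p \<in> badset n r then 0 else 1::real)) = real (card (Off n)) + real (card (Off n - badset n r))"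
    by (simp add: sum.distrib sum.If_cases fin_Off Diff_eq)
  moreover have "card (Off n - badset n r) = card (Off n) - card (badset n r)"
    using badset_sub fin_Off by (meson card_Diff_subset finite_subset)
  moreover have "card (badset n r) \<le> card (Off n)"
    using badset_sub fin_Off card_mono by blast
  ultimately show ?thesis by (simp add: of_nat_diff)
qed





lemma sum_sq_ge:
  fixes x :: "'a \<Rightarrow> real"
  assumes "finite V"
  shows "(\<Sum>u\<in>V. x u)^2 \<le> real (card V) * (\<Sum>u\<in>V. (x u)^2)"
proof (cases "V = {}")
  case True then show ?thesis by simp
next
  case False
  define k where "k = real (card V)"
  define s where "s = (\<Sum>u\<in>V. x u)"
  have k: "k > 0" using False assms k_def by (simp add: card_gt_0_iff)
  have "0 \<le> (\<Sum>u\<in>V. (k * x u - s)^2)" by (intro sum_nonneg) auto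
  also have "\<dots> = (\<Sum>u\<in>V. k^2 * (x u)^2 - 2 * k * s * x u + s^2)"
    by (intro sum.cong) (auto simp: power2_eq_square algebra_simps)
  also have "\<dots> = k^2 * (\<Sum>u\<in>V. (x u)^2) - 2 * k * s * s + k * s^2"
    by (simp add: sum.distrib sum_subtractf sum_distrib_left[symmetric] s_def k_def)
  finally have "0 \<le> k * (k * (\<Sum>u\<in>V. (x u)^2) - s^2)"
    by (simp add: power2_eq_square algebra_simps)
  then have "0 \<le> k * (\<Sum>u\<in>V. (x u)^2) - s^2" using k by (simp add: zero_le_mult_iff)
  then show ?thesis unfolding s_def k_def by simp
qed

lemma mantel:
  fixes S :: "('a \<times> 'a) set"
  assumes fin: "finite V" and sub: "S \<subseteq> V \<times> V" and symS: "\<And>u w. (u,w) \<in> S \<Longrightarrow> (w,u) \<in> S"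
    and tri: "\<And>u w x. (u,w) \<in> S \<Longrightarrow> (u,x) \<in> S \<Longrightarrow> (w,x) \<in> S \<Longrightarrow> False"
  shows "2 * card S \<le> card V ^ 2"
proof -
  define nb where "nb u = {w. (u,w) \<in> S}" for u
  define d where "d u = card (nb u)" for u
  have nbV: "nb u \<subseteq> V" for u using sub nb_def by auto
  have finnb: "finite (nb u)" for u using nbV fin finite_subset by blast
  have SS: "S = Sigma V nb" using sub unfolding nb_def by auto
  have finS: "finite S" using SS fin finnb by simp
  have cS: "card S = (\<Sum>u\<in>V. d u)" unfolding SS d_def using fin finnb by (simp add: card_SigmaI)
  have pair: "d u + d w \<le> card V" if "(u,w) \<in> S" for u w
  proof -
    have "nb u \<inter> nb w = {}" using tri[OF that] unfolding nb_def by auto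
    then have "card (nb u \<union> nb w) = d u + d w" unfolding d_def using finnb by (simp add: card_Un_disjoint)
    moreover have "card (nb u \<union> nb w) \<le> card V" using nbV fin by (simp add: card_mono)
    ultimately show ?thesis by simp
  qed
  have s1: "(\<Sum>p\<in>S. d (fst p)) = (\<Sum>u\<in>V. d u * d u)"
    unfolding SS using sum.Sigma[OF fin, of nb "\<lambda>u w. d u"] finnb by (simp add: split_def d_def)
  have s2: "(\<Sum>p\<in>S. d (snd p)) = (\<Sum>p\<in>S. d (fst p))"
    by (rule sum.reindex_bij_witness[where i="\<lambda>p. (snd p, fst p)" and j="\<lambda>p. (snd p, fst p)"])
       (auto intro: symS)
  have "(\<Sum>p\<in>S. d (fst p) + d (snd p)) \<le> (\<Sum>p\<in>S. card V)"
    by (intro sum_mono) (auto intro: pair)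
  then have key: "2 * (\<Sum>u\<in>V. d u * d u) \<le> card V * card S"
    using s1 s2 by (simp add: sum.distrib mult_2 mult.commute)
  have cs: "(\<Sum>u\<in>V. real (d u))^2 \<le> real (card V) * (\<Sum>u\<in>V. (real (d u))^2)"
    by (rule sum_sq_ge[OF fin])
  have k1: "2 * (\<Sum>u\<in>V. (real (d u))^2) \<le> real (card V) * real (card S)"
    using key by (simp add: power2_eq_square flip: of_nat_mult of_nat_sum)
  have cSr: "real (card S) = (\<Sum>u\<in>V. real (d u))" using cS by simp
  have "2 * real (card S)^2 \<le> real (card V) * (2 * (\<Sum>u\<in>V. (real (d u))^2))"
    using cs cSr by simp
  also have "\<dots> \<le> real (card V) * (real (card V) * real (card S))"
    using k1 by (intro mult_left_mono) auto
  finally have m: "(2 * real (card S)) * real (card S) \<le> (real (card V)^2) * real (card S)"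
    by (simp add: power2_eq_square mult_ac)
  have "2 * real (card S) \<le> real (card V)^2"
  proof (cases "card S = 0")
    case False
    then have "real (card S) > 0" by simp
    then show ?thesis using m by (simp add: mult_le_cancel_right_pos)
  qed simp
  then show ?thesis by (metis of_nat_le_iff of_nat_mult of_nat_numeral of_nat_power)
qed

lemma arith_huge:
  fixes a b n :: nat
  assumes "n \<le> 2 * a" "a + b \<le> n"
  shows "8 * (2 * (a * (n - a)) + 2 * (b * (n - a - b))) \<le> 5 * n ^ 2"
proof -
  define s where "s = n - a"
  define t where "t = n - a - b"
  have h: "n = a + s" "s = b + t" "2 * s \<le> n" using assms s_def t_def by auto
  have "8 * (2 * (a * s) + 2 * (b * t)) \<le> 5 * n ^ 2"
  proof -
    have r1: "(real s - 2 * real b)^2 \<ge> 0" by simp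
    have hr: "real (2 * s) \<le> real n" using h(3) by (simp only: of_nat_le_iff)
    have r2: "(5 * real n - 6 * real s) * (real n - 2 * real s) \<ge> 0"
      using hr by (intro mult_nonneg_nonneg) simp_all
    have ha: "real a = real n - real s" and ht: "real t = real s - real b" using h by simp_all
    have idt: "real (5 * n ^ 2) - real (8 * (2 * (a * s) + 2 * (b * t))) =
       (5 * real n - 6 * real s) * (real n - 2 * real s) + 4 * (real s - 2 * real b)^2"
      unfolding of_nat_mult of_nat_add of_nat_power of_nat_numeral ha ht
      by (simp add: power2_eq_square algebra_simps)
    have "real (8 * (2 * (a * s) + 2 * (b * t))) \<le> real (5 * n ^ 2)"
      using r1 r2 idt by linarith
    then show ?thesis by (simp only: of_nat_le_iff)
  qed
  then show ?thesis using s_def t_def by simp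
qed



definition Fr :: "nat \<Rightarrow> (nat \<Rightarrow> nat \<Rightarrow> relation) \<Rightarrow> nat \<Rightarrow> nat set" where
  "Fr n r x = {l \<in> agents n. l \<noteq> x \<and> r x l = Friends}"
definition En :: "nat \<Rightarrow> (nat \<Rightarrow> nat \<Rightarrow> relation) \<Rightarrow> nat \<Rightarrow> nat set" where
  "En n r x = {l \<in> agents n. l \<noteq> x \<and> r x l = Enemies}"

lemma Fr_sub: "Fr n r x \<subseteq> agents n" and En_sub: "En n r x \<subseteq> agents n"
  by (auto simp: Fr_def En_def)

lemma five_disj:
  assumes "X1 \<union> X2 \<union> X3 \<union> X4 \<union> X5 \<subseteq> agents n"
    "X1 \<inter> X2 = {}" "X1 \<inter> X3 = {}" "X1 \<inter> X4 = {}" "X1 \<inter> X5 = {}"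
    "X2 \<inter> X3 = {}" "X2 \<inter> X4 = {}" "X2 \<inter> X5 = {}"
    "X3 \<inter> X4 = {}" "X3 \<inter> X5 = {}" "X4 \<inter> X5 = {}"
  shows "card X1 + card X2 + card X3 + card X4 + card X5 \<le> n"
proof -
  have f: "finite X1" "finite X2" "finite X3" "finite X4" "finite X5"
    using assms(1) fin_agents finite_subset by blast+
  have eq: "card (X1 \<union> X2 \<union> X3 \<union> X4 \<union> X5) = card X1 + card X2 + card X3 + card X4 + card X5"
    using f assms(2-11) by (simp add: card_Un_disjoint Int_Un_distrib2)
  have "card (X1 \<union> X2 \<union> X3 \<union> X4 \<union> X5) \<le> card (agents n)"
    using assms(1) fin_agents card_mono by metis
  then show ?thesis using card_agents[of n] eq by simp
qed

locale balanced =
  fixes n :: nat and r :: "nat \<Rightarrow> nat \<Rightarrow> relation"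
  assumes rn: "rel_network n r" and sb: "structurally_balanced n r" and n3: "n \<ge> 3"
begin

abbreviation "V \<equiv> agents n"

lemma sym: "a \<in> V \<Longrightarrow> b \<in> V \<Longrightarrow> a \<noteq> b \<Longrightarrow> r a b = r b a"
  using rn unfolding rel_network_def by blast

lemma FF: "a \<in> V \<Longrightarrow> b \<in> V \<Longrightarrow> c \<in> V \<Longrightarrow> a \<noteq> b \<Longrightarrow> b \<noteq> c \<Longrightarrow> a \<noteq> c \<Longrightarrow>
   r a b = Friends \<Longrightarrow> r b c = Friends \<Longrightarrow> r a c = Friends"
  using sb unfolding structurally_balanced_def by blast
lemma EE: "a \<in> V \<Longrightarrow> b \<in> V \<Longrightarrow> c \<in> V \<Longrightarrow> a \<noteq> b \<Longrightarrow> b \<noteq> c \<Longrightarrow> a \<noteq> c \<Longrightarrow>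
   r a b = Enemies \<Longrightarrow> r b c = Enemies \<Longrightarrow> r a c = Friends"
  using sb unfolding structurally_balanced_def by blast
lemma EF: "a \<in> V \<Longrightarrow> b \<in> V \<Longrightarrow> c \<in> V \<Longrightarrow> a \<noteq> b \<Longrightarrow> b \<noteq> c \<Longrightarrow> a \<noteq> c \<Longrightarrow>
   r a b = Enemies \<Longrightarrow> r b c = Friends \<Longrightarrow> r a c = Enemies"
  using sb unfolding structurally_balanced_def by blast
lemma FE: "a \<in> V \<Longrightarrow> b \<in> V \<Longrightarrow> c \<in> V \<Longrightarrow> a \<noteq> b \<Longrightarrow> b \<noteq> c \<Longrightarrow> a \<noteq> c \<Longrightarrow>
   r a b = Friends \<Longrightarrow> r b c = Enemies \<Longrightarrow> r a c = Enemies"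
  using EF[of c b a] sym by metis

lemma P_F: assumes "i \<in> V" "j \<in> V" "i \<noteq> j" "r i j = Friends" shows "Pv n r i j = {}"
proof -
  { fix l assume l: "l \<in> V" "l \<noteq> i" "l \<noteq> j" "cls (r l j) < cls (r l i)"
    have False
    proof (cases "r l j")
      case Friends
      then have "r l i = Friends" using FF[of l j i] assms l sym by metis
      then show ?thesis using l by (simp add: cls_def)
    next
      case Impartial
      then have "r l i = Enemies" using l by (cases "r l i") (auto simp: cls_def)
      then have "r l j = Enemies" using EF[of l i j] assms l by metis
      then show ?thesis using Impartial by simp
    next
      case Enemies
      then show ?thesis using l by (cases "r l i") (auto simp: cls_def)
    qed }
  then show ?thesis unfolding Pv_def by blast
qed

lemma P_E: assumes "i \<in> V" "j \<in> V" "i \<noteq> j" "r i j = Enemies" shows "Pv n r i j \<subseteq> Fr n r j"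
proof
  fix l assume "l \<in> Pv n r i j"
  then have l: "l \<in> V" "l \<noteq> i" "l \<noteq> j" "cls (r l j) < cls (r l i)" unfolding Pv_def by auto
  show "l \<in> Fr n r j"
  proof (cases "r l j")
    case Friends
    then show ?thesis using l sym[of l j] assms by (auto simp: Fr_def)
  next
    case Impartial
    then have "r l i = Enemies" using l by (cases "r l i") (auto simp: cls_def)
    then have "r l j = Friends" using EE[of l i j] assms l by metis
    then show ?thesis using Impartial by simp
  next
    case Enemies
    then show ?thesis using l by (cases "r l i") (auto simp: cls_def)
  qed
qed

lemma P_I: assumes "i \<in> V" "j \<in> V" "i \<noteq> j" shows "Pv n r i j \<subseteq> Fr n r j \<union> En n r i"
proof
  fix l assume "l \<in> Pv n r i j"
  then have l: "l \<in> V" "l \<noteq> i" "l \<noteq> j" "cls (r l j) < cls (r l i)" unfolding Pv_def by auto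
  show "l \<in> Fr n r j \<union> En n r i"
  proof (cases "r l j")
    case Friends
    then show ?thesis using l sym[of l j] assms by (auto simp: Fr_def)
  next
    case Impartial
    then have "r l i = Enemies" using l by (cases "r l i") (auto simp: cls_def)
    then show ?thesis using l sym[of l i] assms by (auto simp: En_def)
  next
    case Enemies
    then show ?thesis using l by (cases "r l i") (auto simp: cls_def)
  qed
qed

definition dom :: "nat \<Rightarrow> nat \<Rightarrow> bool" where
  "dom i j \<longleftrightarrow> n - 2 \<le> 2 * card (Pv n r i j)"

lemma dom_props:
  assumes "i \<in> V" "j \<in> V" "i \<noteq> j" "dom i j"
  shows "r i j \<noteq> Friends" "r i j = Enemies \<Longrightarrow> n - 2 \<le> 2 * card (Fr n r j)"
    "n - 2 \<le> 2 * (card (Fr n r j) + card (En n r i))"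
proof -
  show "r i j \<noteq> Friends" using P_F[OF assms(1-3)] assms(4) n3 unfolding dom_def by auto
  show "r i j = Enemies \<Longrightarrow> n - 2 \<le> 2 * card (Fr n r j)"
    using P_E[OF assms(1-3)] assms(4) card_mono[OF finite_subset[OF Fr_sub fin_agents]] unfolding dom_def
    by (meson dual_order.trans mult_le_mono2)
  have "card (Pv n r i j) \<le> card (Fr n r j) + card (En n r i)"
    using P_I[OF assms(1-3)] card_mono[OF _ P_I[OF assms(1-3)]] card_Un_le[of "Fr n r j" "En n r i"]
      finite_subset[OF Fr_sub fin_agents] finite_subset[OF En_sub fin_agents]
    by (meson finite_UnI le_trans)
  moreover have "n - 2 \<le> 2 * card (Pv n r i j)" using assms(4) unfolding dom_def .
  ultimately show "n - 2 \<le> 2 * (card (Fr n r j) + card (En n r i))"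
    by (meson le_trans mult_le_mono2)
qed

lemma bad_dom: "(i,j) \<in> badset n r \<longleftrightarrow> (i,j) \<in> Off n \<and> (dom i j \<or> dom j i)"
  unfolding badset_def dom_def by auto


lemma Fr_notin: "x \<notin> Fr n r x" and En_notin: "x \<notin> En n r x"
  by (auto simp: Fr_def En_def)

lemma huge_case:
  assumes a0: "a0 \<in> V" and big: "n \<le> 2 * (card (Fr n r a0) + 1)"
    and ij: "i \<in> V" "j \<in> V" "i \<noteq> j" and d: "dom i j"
  defines "A \<equiv> insert a0 (Fr n r a0)" and "B \<equiv> En n r a0"
  shows "(i,j) \<in> A \<times> (V - A) \<union> (V - A) \<times> A \<union> B \<times> (V - A - B) \<union> (V - A - B) \<times> B"
proof -
  have cA: "card A = card (Fr n r a0) + 1"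
    unfolding A_def using Fr_notin finite_subset[OF Fr_sub fin_agents] by simp
  have AV: "A \<subseteq> V" unfolding A_def using a0 Fr_sub by auto
  have nF: "r i j \<noteq> Friends" using dom_props(1)[OF ij d] .
  have inA: "x \<in> A \<Longrightarrow> x \<noteq> a0 \<Longrightarrow> r a0 x = Friends" for x unfolding A_def Fr_def by auto
  have notA: "x \<in> V \<Longrightarrow> x \<notin> A \<Longrightarrow> x \<noteq> a0 \<and> r a0 x \<noteq> Friends" for x unfolding A_def Fr_def by auto
  have AFj: "A \<inter> insert j (Fr n r j) = {}" if "j \<notin> A"
  proof -
    { fix l assume l: "l \<in> A" "l \<in> insert j (Fr n r j)"
      then have lj: "l \<noteq> j" "r j l = Friends" "l \<in> V" using that by (auto simp: Fr_def)
      have "j \<noteq> a0" "r a0 j \<noteq> Friends" using notA[OF ij(2) that] by auto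
      have False
      proof (cases "l = a0")
        case True then show ?thesis using lj sym[of j l] ij \<open>r a0 j \<noteq> Friends\<close> by auto
      next
        case False
        then have "r a0 l = Friends" using inA l(1) by auto
        then have "r a0 j = Friends" using FF[of a0 l j] lj sym[of l j] a0 ij False \<open>j \<noteq> a0\<close> by metis
        then show ?thesis using \<open>r a0 j \<noteq> Friends\<close> by simp
      qed }
    then show ?thesis by blast
  qed
  show ?thesis
  proof (cases "i \<in> A")
    case True
    show ?thesis
    proof (cases "j \<in> A")
      case True
      have "r i j = Friends"
      proof (cases "i = a0")
        case True then show ?thesis using inA[of j] \<open>j \<in> A\<close> ij by auto
      next
        case False
        show ?thesis
        proof (cases "j = a0")
          case True then show ?thesis using inA[of i] \<open>i \<in> A\<close> False sym[of i a0] ij a0 by auto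
        next
          case False2: False
          have "r i a0 = Friends" using inA[of i] \<open>i \<in> A\<close> False sym[of i a0] ij a0 by auto
          moreover have "r a0 j = Friends" using inA[of j] \<open>j \<in> A\<close> False2 by auto
          ultimately show ?thesis using FF[of i a0 j] ij a0 False False2 by metis
        qed
      qed
      then show ?thesis using nF by simp
    next
      case False
      then show ?thesis using \<open>i \<in> A\<close> ij by auto
    qed
  next
    case iA: False
    show ?thesis
    proof (cases "j \<in> A")
      case True then show ?thesis using iA ij by auto
    next
      case jA: False
      have dj: "A \<inter> insert j (Fr n r j) = {}" by (rule AFj[OF jA])
      have iF: "i \<notin> insert j (Fr n r j)" if "r i j \<noteq> Friends"
        using that ij sym[of i j] by (auto simp: Fr_def)
      have cFj: "card (insert j (Fr n r j)) = card (Fr n r j) + 1"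
        using Fr_notin finite_subset[OF Fr_sub fin_agents] by simp
      show ?thesis
      proof (cases "r i j")
        case Friends then show ?thesis using nF by simp
      next
        case Enemies
        have e: "n - 2 \<le> 2 * card (Fr n r j)" using dom_props(2)[OF ij d Enemies] .
        have "card A + card (insert j (Fr n r j)) + card {i} + card ({}::nat set) + card ({}::nat set) \<le> n"
          by (rule five_disj) (use AV ij Fr_sub dj iA iF Enemies in auto)
        then show ?thesis using e cA cFj big n3 by simp
      next
        case Impartial
        show ?thesis
        proof (cases "i \<in> B")
          case iB: True
          have "j \<notin> B"
          proof
            assume "j \<in> B"
            then have "r a0 j = Enemies" "j \<noteq> a0" unfolding B_def En_def by auto
            moreover have "r i a0 = Enemies" "i \<noteq> a0" using iB sym[of i a0] ij a0 unfolding B_def En_def by auto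
            ultimately have "r i j = Friends" using EE[of i a0 j] ij a0 by metis
            then show False using Impartial by simp
          qed
          then show ?thesis using iB ij jA by auto
        next
          case iB: False
          show ?thesis
          proof (cases "j \<in> B")
            case True then show ?thesis using iB ij iA by auto
          next
            case jB: False
            have e: "n - 2 \<le> 2 * (card (Fr n r j) + card (En n r i))" using dom_props(3)[OF ij d] .
            have AEi: "A \<inter> En n r i = {}"
            proof -
              { fix l assume l: "l \<in> A" "l \<in> En n r i"
                then have li: "l \<noteq> i" "r i l = Enemies" "l \<in> V" by (auto simp: En_def)
                have ia0: "i \<noteq> a0" using iA A_def by auto
                have "r i a0 = Enemies"
                proof (cases "l = a0")
                  case True then show ?thesis using li by simp
                next
                  case False
                  then have "r l a0 = Friends" using inA[of l] l(1) sym[of l a0] li a0 by auto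
                  then show ?thesis using EF[of i l a0] li ij a0 ia0 False by metis
                qed
                then have "i \<in> B" unfolding B_def En_def using sym[of i a0] ij a0 ia0 by auto
                then have False using iB by simp }
              then show ?thesis by blast
            qed
            have FjEi: "insert j (Fr n r j) \<inter> En n r i = {}"
            proof -
              { fix l assume l: "l \<in> insert j (Fr n r j)" "l \<in> En n r i"
                then have li: "l \<noteq> i" "r i l = Enemies" "l \<in> V" by (auto simp: En_def)
                have False
                proof (cases "l = j")
                  case True then show ?thesis using li Impartial by simp
                next
                  case False
                  then have "r l j = Friends" using l(1) sym[of l j] li ij by (auto simp: Fr_def)
                  then have "r i j = Enemies" using EF[of i l j] li ij False by metis
                  then show ?thesis using Impartial by simp
                qed }
              then show ?thesis by blast
            qed
            have "card A + card {i} + card (insert j (Fr n r j)) + card (En n r i) + card ({}::nat set) \<le> n"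
              by (rule five_disj) (use AV ij Fr_sub En_sub dj iA iF Impartial AEi FjEi En_notin in auto)
            then show ?thesis using e cA cFj big n3 by simp
          qed
        qed
      qed
    qed
  qed
qed

lemma path_contra:
  assumes xyz: "x \<in> V" "y \<in> V" "z \<in> V" "x \<noteq> y" "y \<noteq> z" "x \<noteq> z"
    and imp: "r x y = Impartial" "r y z = Impartial" "r x z = Impartial"
    and d1: "n - 2 \<le> 2 * (card (Fr n r y) + card (En n r x))"
    and d2: "n - 2 \<le> 2 * (card (Fr n r z) + card (En n r y))"
  shows False
proof -
  have s: "r y x = Impartial" "r z y = Impartial" "r z x = Impartial"
    using imp sym xyz by metis+
  have c1: "{x} \<inter> En n r x = {}" using En_notin by auto
  have c2: "{x} \<inter> insert y (Fr n r y) = {}" using s xyz by (auto simp: Fr_def)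
  have c3: "{x} \<inter> En n r y = {}" using s xyz by (auto simp: En_def)
  have c4: "{x} \<inter> insert z (Fr n r z) = {}" using s xyz by (auto simp: Fr_def)
  have c5: "En n r x \<inter> insert y (Fr n r y) = {}"
  proof -
    { fix l assume l: "l \<in> En n r x" "l \<in> insert y (Fr n r y)"
      then have lx: "l \<noteq> x" "r x l = Enemies" "l \<in> V" by (auto simp: En_def)
      have False
      proof (cases "l = y")
        case True then show ?thesis using lx imp by simp
      next
        case False
        then have "r l y = Friends" using l(2) sym[of l y] lx xyz by (auto simp: Fr_def)
        then show ?thesis using EF[of x l y] lx xyz False imp by auto
      qed }
    then show ?thesis by blast
  qed
  have c6: "En n r x \<inter> En n r y = {}"
  proof -
    { fix l assume l: "l \<in> En n r x" "l \<in> En n r y"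
      then have "l \<noteq> x" "r x l = Enemies" "l \<in> V" "l \<noteq> y" "r l y = Enemies"
        using sym[of l y] xyz by (auto simp: En_def)
      then have False using EE[of x l y] xyz imp by auto }
    then show ?thesis by blast
  qed
  have c7: "En n r x \<inter> insert z (Fr n r z) = {}"
  proof -
    { fix l assume l: "l \<in> En n r x" "l \<in> insert z (Fr n r z)"
      then have lx: "l \<noteq> x" "r x l = Enemies" "l \<in> V" by (auto simp: En_def)
      have False
      proof (cases "l = z")
        case True then show ?thesis using lx imp by simp
      next
        case False
        then have "r l z = Friends" using l(2) sym[of l z] lx xyz by (auto simp: Fr_def)
        then show ?thesis using EF[of x l z] lx xyz False imp by auto
      qed }
    then show ?thesis by blast
  qed
  have c8: "insert y (Fr n r y) \<inter> En n r y = {}" by (auto simp: Fr_def En_def)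
  have c9: "insert y (Fr n r y) \<inter> insert z (Fr n r z) = {}"
  proof -
    { fix l assume l: "l \<in> insert y (Fr n r y)" "l \<in> insert z (Fr n r z)"
      have False
      proof (cases "l = y")
        case True then show ?thesis using l(2) s xyz by (auto simp: Fr_def)
      next
        case False
        then have ly: "r y l = Friends" "l \<in> V" using l(1) by (auto simp: Fr_def)
        show ?thesis
        proof (cases "l = z")
          case True then show ?thesis using ly imp by simp
        next
          case False2: False
          then have "r l z = Friends" using l(2) sym[of l z] ly xyz by (auto simp: Fr_def)
          then show ?thesis using FF[of y l z] ly xyz False False2 imp by auto
        qed
      qed }
    then show ?thesis by blast
  qed
  have c10: "En n r y \<inter> insert z (Fr n r z) = {}"
  proof -
    { fix l assume l: "l \<in> En n r y" "l \<in> insert z (Fr n r z)"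
      then have ly: "l \<noteq> y" "r y l = Enemies" "l \<in> V" by (auto simp: En_def)
      have False
      proof (cases "l = z")
        case True then show ?thesis using ly imp by simp
      next
        case False
        then have "r l z = Friends" using l(2) sym[of l z] ly xyz by (auto simp: Fr_def)
        then show ?thesis using EF[of y l z] ly xyz False imp by auto
      qed }
    then show ?thesis by blast
  qed
  have "card {x} + card (En n r x) + card (insert y (Fr n r y)) + card (En n r y) + card (insert z (Fr n r z)) \<le> n"
    by (rule five_disj) (use xyz Fr_sub En_sub c1 c2 c3 c4 c5 c6 c7 c8 c9 c10 in auto)
  moreover have "card (insert y (Fr n r y)) = card (Fr n r y) + 1" "card (insert z (Fr n r z)) = card (Fr n r z) + 1"
    using Fr_notin finite_subset[OF Fr_sub fin_agents] by simp_all
  ultimately show False using d1 d2 n3 by simp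
qed

lemma bad_bound_loc: "8 * card (badset n r) \<le> 5 * n ^ 2"
proof (cases "\<exists>a0\<in>V. n \<le> 2 * (card (Fr n r a0) + 1)")
  case True
  then obtain a0 where a0: "a0 \<in> V" "n \<le> 2 * (card (Fr n r a0) + 1)" by blast
  define A where "A = insert a0 (Fr n r a0)"
  define B where "B = En n r a0"
  define T where "T = A \<times> (V - A) \<union> (V - A) \<times> A \<union> B \<times> (V - A - B) \<union> (V - A - B) \<times> B"
  have sub: "badset n r \<subseteq> T"
  proof
    fix p assume p: "p \<in> badset n r"
    obtain i j where pij: "p = (i,j)" by fastforce
    have ij: "i \<in> V" "j \<in> V" "i \<noteq> j" "dom i j \<or> dom j i"
      using p pij bad_dom[of i j] by (auto simp: Off_def)
    show "p \<in> T"
    proof (cases "dom i j")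
      case True
      then show ?thesis using huge_case[OF a0 ij(1-3) True] pij unfolding T_def A_def B_def by simp
    next
      case False
      then have "dom j i" using ij by simp
      then have "(j,i) \<in> T" using huge_case[OF a0 ij(2) ij(1) ij(3)[symmetric]] unfolding T_def A_def B_def by simp
      then show ?thesis using pij unfolding T_def by auto
    qed
  qed
  have AV: "A \<subseteq> V" unfolding A_def using a0 Fr_sub by auto
  have BVA: "B \<subseteq> V - A" unfolding A_def B_def using En_notin by (auto simp: En_def Fr_def)
  have finV: "finite V" by (rule fin_agents)
  have fA: "finite A" "finite B" using AV BVA finV finite_subset by blast+
  have cVA: "card (V - A) = n - card A" using AV finV card_agents by (simp add: card_Diff_subset fA)
  have cVAB: "card (V - A - B) = n - card A - card B"
    using BVA finV cVA fA by (simp add: card_Diff_subset)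
  have "card (badset n r) \<le> card T"
    using sub by (rule card_mono[rotated]) (simp add: T_def finV fA)
  also have "card T \<le> card (A \<times> (V - A)) + card ((V - A) \<times> A) + card (B \<times> (V - A - B)) + card ((V - A - B) \<times> B)"
    unfolding T_def by (meson card_Un_le add_le_mono order_trans le_refl)
  also have "\<dots> = 2 * (card A * (n - card A)) + 2 * (card B * (n - card A - card B))"
    by (simp add: card_cartesian_product cVA cVAB)
  finally have "card (badset n r) \<le> 2 * (card A * (n - card A)) + 2 * (card B * (n - card A - card B))" .
  moreover have "8 * (2 * (card A * (n - card A)) + 2 * (card B * (n - card A - card B))) \<le> 5 * n ^ 2"
  proof (rule arith_huge)
    show "n \<le> 2 * card A" using a0 unfolding A_def using Fr_notin finite_subset[OF Fr_sub fin_agents] by simp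
    have "card (A \<union> B) \<le> n" using AV BVA finV card_agents card_mono by (metis Diff_subset le_sup_iff order_trans)
    moreover have "card (A \<union> B) = card A + card B" using BVA fA card_Un_disjoint[of A B] by blast
    ultimately show "card A + card B \<le> n" by simp
  qed
  ultimately show ?thesis by simp
next
  case False
  then have small: "\<And>x. x \<in> V \<Longrightarrow> 2 * (card (Fr n r x) + 1) < n" by auto
  have domI: "r i j = Impartial" if "i \<in> V" "j \<in> V" "i \<noteq> j" "dom i j" for i j
  proof -
    have "r i j \<noteq> Friends" using dom_props(1)[OF that] .
    moreover have "r i j \<noteq> Enemies"
      using dom_props(2)[OF that] small[OF that(2)] n3 by auto
    ultimately show ?thesis by (cases "r i j") auto
  qed
  have "2 * card (badset n r) \<le> card V ^ 2"
  proof (rule mantel[OF fin_agents])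
    show "badset n r \<subseteq> V \<times> V" using badset_sub by (auto simp: Off_def)
    show "(w,u) \<in> badset n r" if "(u,w) \<in> badset n r" for u w
      using that by (auto simp: badset_def Off_def)
    show False if t: "(u,w) \<in> badset n r" "(u,x) \<in> badset n r" "(w,x) \<in> badset n r" for u w x
    proof -
      have dist: "u \<in> V" "w \<in> V" "x \<in> V" "u \<noteq> w" "u \<noteq> x" "w \<noteq> x"
        using t by (auto simp: badset_def Off_def)
      have d: "dom u w \<or> dom w u" "dom u x \<or> dom x u" "dom w x \<or> dom x w"
        using t bad_dom by auto
      have impI: "r a b = Impartial" if "a \<in> V" "b \<in> V" "a \<noteq> b" "dom a b \<or> dom b a" for a b
        using that domI[of a b] domI[of b a] sym[of a b] by auto
      have I: "r u w = Impartial" "r u x = Impartial" "r w x = Impartial"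
        "r w u = Impartial" "r x u = Impartial" "r x w = Impartial"
        using impI[of u w] impI[of u x] impI[of w x] impI[of w u] impI[of x u] impI[of x w] dist d by auto
      have D: "n - 2 \<le> 2 * (card (Fr n r b) + card (En n r a))" if "a \<in> V" "b \<in> V" "a \<noteq> b" "dom a b" for a b
        using dom_props(3)[OF that] .
      have P: "\<not> (dom a b \<and> dom b c)" if "a \<in> V" "b \<in> V" "c \<in> V" "a \<noteq> b" "b \<noteq> c" "a \<noteq> c"
        "r a b = Impartial" "r b c = Impartial" "r a c = Impartial" for a b c
        using path_contra[OF that] D[of a b] D[of b c] that by blast
      show False
        using d P[of u w x] P[of u x w] P[of w u x] P[of w x u] P[of x u w] P[of x w u] dist I by blast
    qed
  qed
  then have "2 * card (badset n r) \<le> n ^ 2" using card_agents by simp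
  then show ?thesis by simp
qed

end

lemma bad_bound:
  assumes "n \<ge> 3" "rel_network n r" "structurally_balanced n r"
  shows "8 * card (badset n r) \<le> 5 * n ^ 2"
proof -
  interpret balanced n r using assms by unfold_locales auto
  show ?thesis by (rule bad_bound_loc)
qed

theorem proposition4:
  fixes n :: nat and q :: real and r :: "nat \<Rightarrow> nat \<Rightarrow> relation"
  assumes "n \<ge> 3" and "0 < q" and "q < 1"
    and "rel_network n r" and "structurally_balanced n r"
  shows "P_D n q r \<ge> q + q * (1 - q) * (3 * real n - 8) / (8 * (real n - 1))"
proof -
  let ?S1 = "\<Sum>p\<in>Off n. duple_share n r {fst p, snd p} (fst p) (snd p)"
  let ?S2 = "\<Sum>p\<in>Off n. duple_share n r {fst p} (fst p) (snd p)"
  have S1': "?S1 = 1 * real (card (Off n)) / 2"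
    by (rule sum_Off_half) (simp add: share_swap insert_commute)
  then have S1: "?S1 = real (card (Off n)) / 2" by simp
  have S2: "2 * ?S2 \<ge> 2 * real (card (Off n)) - real (card (badset n r))" by (rule sum_s)
  have bb: "8 * real (card (badset n r)) \<le> 5 * real n ^ 2"
  proof -
    have "real (8 * card (badset n r)) \<le> real (5 * n ^ 2)"
      using bad_bound[OF assms(1,4,5)] by (simp only: of_nat_le_iff)
    then show ?thesis by simp
  qed
  have cO: "real (card (Off n)) = real n * (real n - 1)"
    using assms(1) by (simp add: card_Off of_nat_diff)
  have PD: "P_D n q r = 2 / (real n * (real n - 1)) * (q * q * ?S1 + q * (1 - q) * ?S2)"
    unfolding PD_formula by (simp add: sum.distrib sum_distrib_left)
  have n1: "real n - 1 > 0" "real n > 0" using assms(1) by auto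
  have qq: "q * (1 - q) > 0" using assms(2,3) by simp
  have S2': "?S2 \<ge> real n * (real n - 1) - 5 * real n ^ 2 / 16"
    using S2 bb cO by linarith
  have mono1: "q * (1 - q) * ?S2 \<ge> q * (1 - q) * (real n * (real n - 1) - 5 * real n ^ 2 / 16)"
    using S2' qq by (simp add: mult_left_mono)
  have "P_D n q r \<ge> 2 / (real n * (real n - 1)) * (q * q * (real n * (real n - 1) / 2) + q * (1 - q) * (real n * (real n - 1) - 5 * real n ^ 2 / 16))"
    unfolding PD S1 cO
  proof (rule mult_left_mono)
    show "0 \<le> 2 / (real n * (real n - 1))" using n1 by simp
  qed (use mono1 in simp)
  also have "2 / (real n * (real n - 1)) * (q * q * (real n * (real n - 1) / 2) + q * (1 - q) * (real n * (real n - 1) - 5 * real n ^ 2 / 16))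
      = q + q * (1 - q) * (3 * real n - 8) / (8 * (real n - 1))"
    using n1 by (simp add: field_simps power2_eq_square)
  finally show ?thesis .
qed
end
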